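(* For a commutative ring $R$ the following are equivalent: (i) $T(R)$ is zero-dimensional; (ii) for each $f\in R$ there exists $n\geq 1$ with $\operatorname{Ann}(f^n)=\operatorname{Ann}(f^{n+1})$, and there exists $h\in\operatorname{Ann}(f^n)$ such that $\operatorname{Ann}(f^n)\cap\operatorname{Ann}(h)=0$; (iii) for each $f\in R$ there exist $n\geq 1$ and a non-zero-divisor $g\in R$ such that $f^n g=f^{2n}$.
   Context: $T(R)=S^{-1}R$ with $S$ the set of non-zero-divisors of $R$ is the total ring of fractions. Zero-dimensional means Krull dimension $0$ (every prime ideal is maximal). *)

theory Defs
  imports "HOL-Algebra.Algebra"
begin

definition ann :: "('a, 'b) ring_scheme \<Rightarrow> 'a \<Rightarrow> 'a set" where
  "ann R x = {y \<in> carrier R. y \<otimes>\<^bsub>R\<^esub> x = \<zero>\<^bsub>R\<^esub>}"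

definition nzd :: "('a, 'b) ring_scheme \<Rightarrow> 'a set" where
  "nzd R = {s \<in> carrier R. \<forall>y \<in> carrier R. s \<otimes>\<^bsub>R\<^esub> y = \<zero>\<^bsub>R\<^esub> \<longrightarrow> y = \<zero>\<^bsub>R\<^esub>}"

definition frac_rel :: "('a, 'b) ring_scheme \<Rightarrow> (('a \<times> 'a) \<times> ('a \<times> 'a)) set" where
  "frac_rel R = {((a, s), (b, t)). a \<in> carrier R \<and> s \<in> nzd R \<and> b \<in> carrier R \<and> t \<in> nzd R \<and>
      (\<exists>u \<in> nzd R. u \<otimes>\<^bsub>R\<^esub> (a \<otimes>\<^bsub>R\<^esub> t \<ominus>\<^bsub>R\<^esub> b \<otimes>\<^bsub>R\<^esub> s) = \<zero>\<^bsub>R\<^esub>)}"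

text \<open>The total ring of fractions T(R) = S^{-1}R, elements are equivalence classes of pairs
  (a, s) standing for a/s; operations are defined on representatives.\<close>
definition frac_mult :: "('a, 'b) ring_scheme \<Rightarrow> ('a \<times> 'a) set \<Rightarrow> ('a \<times> 'a) set \<Rightarrow> ('a \<times> 'a) set" where
  "frac_mult R A B = (\<Union>x\<in>A. \<Union>y\<in>B.
     frac_rel R `` {(fst x \<otimes>\<^bsub>R\<^esub> fst y, snd x \<otimes>\<^bsub>R\<^esub> snd y)})"

definition frac_add :: "('a, 'b) ring_scheme \<Rightarrow> ('a \<times> 'a) set \<Rightarrow> ('a \<times> 'a) set \<Rightarrow> ('a \<times> 'a) set" where
  "frac_add R A B = (\<Union>x\<in>A. \<Union>y\<in>B.
     frac_rel R `` {(fst x \<otimes>\<^bsub>R\<^esub> snd y \<oplus>\<^bsub>R\<^esub> fst y \<otimes>\<^bsub>R\<^esub> snd x, snd x \<otimes>\<^bsub>R\<^esub> snd y)})"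

definition total_frac_ring :: "('a, 'b) ring_scheme \<Rightarrow> ('a \<times> 'a) set ring" where
  "total_frac_ring R =
    \<lparr>carrier = (carrier R \<times> nzd R) // frac_rel R,
      monoid.mult = frac_mult R,
      monoid.one = frac_rel R `` {(\<one>\<^bsub>R\<^esub>, \<one>\<^bsub>R\<^esub>)},
      ring.zero = frac_rel R `` {(\<zero>\<^bsub>R\<^esub>, \<one>\<^bsub>R\<^esub>)},
      ring.add = frac_add R\<rparr>"

text \<open>Zero-dimensional: Krull dimension 0, i.e. every prime ideal is maximal.\<close>
definition zero_dimensional :: "('a, 'b) ring_scheme \<Rightarrow> bool" where
  "zero_dimensional S \<longleftrightarrow> (\<forall>P. primeideal P S \<longrightarrow> maximalideal P S)"

end

theory Submission
  imports Defs
begin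


definition fcls :: "('a, 'b) ring_scheme \<Rightarrow> 'a \<Rightarrow> 'a \<Rightarrow> ('a \<times> 'a) set" where
  "fcls R a s = frac_rel R `` {(a, s)}"

context cring
begin

lemmas rs = a_minus_def l_distr r_distr l_minus r_minus m_ac a_ac minus_add

lemma nzd_carrier: "s \<in> nzd R \<Longrightarrow> s \<in> carrier R"
  by (simp add: nzd_def)

lemma nzd_cancel: "s \<in> nzd R \<Longrightarrow> y \<in> carrier R \<Longrightarrow> s \<otimes> y = \<zero> \<Longrightarrow> y = \<zero>"
  by (simp add: nzd_def)

lemma nzd_cancel': "s \<in> nzd R \<Longrightarrow> y \<in> carrier R \<Longrightarrow> y \<otimes> s = \<zero> \<Longrightarrow> y = \<zero>"
  by (simp add: nzd_def m_comm)

lemma nzd_one: "\<one> \<in> nzd R"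
  by (simp add: nzd_def)

lemma nzd_mult:
  assumes st: "s \<in> nzd R" "t \<in> nzd R" shows "s \<otimes> t \<in> nzd R"
proof -
  have sc: "s \<in> carrier R" "t \<in> carrier R" using st nzd_carrier by auto
  have "y = \<zero>" if y: "y \<in> carrier R" "s \<otimes> t \<otimes> y = \<zero>" for y
  proof -
    have "s \<otimes> (t \<otimes> y) = \<zero>" using y sc by (simp add: m_assoc)
    then have "t \<otimes> y = \<zero>" using nzd_cancel[OF st(1)] y sc by simp
    then show "y = \<zero>" using nzd_cancel[OF st(2)] y by simp
  qed
  then show ?thesis using sc unfolding nzd_def by simp
qed

lemma nzd_pow: "s \<in> nzd R \<Longrightarrow> s [^] (n::nat) \<in> nzd R"
  by (induction n) (auto simp: nzd_one nzd_mult nzd_carrier)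

lemma frac_rel_iff:
  "((a, s), (b, t)) \<in> frac_rel R \<longleftrightarrow>
     a \<in> carrier R \<and> s \<in> nzd R \<and> b \<in> carrier R \<and> t \<in> nzd R \<and> a \<otimes> t = b \<otimes> s"
proof -
  have d: "((a, s), (b, t)) \<in> frac_rel R \<longleftrightarrow> a \<in> carrier R \<and> s \<in> nzd R \<and> b \<in> carrier R \<and> t \<in> nzd R \<and>
      (\<exists>u \<in> nzd R. u \<otimes> (a \<otimes> t \<ominus> b \<otimes> s) = \<zero>)"
    unfolding frac_rel_def by simp
  have key: "(\<exists>u \<in> nzd R. u \<otimes> (a \<otimes> t \<ominus> b \<otimes> s) = \<zero>) \<longleftrightarrow> a \<otimes> t = b \<otimes> s"
    if c: "a \<in> carrier R" "s \<in> nzd R" "b \<in> carrier R" "t \<in> nzd R"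
  proof
    assume "\<exists>u \<in> nzd R. u \<otimes> (a \<otimes> t \<ominus> b \<otimes> s) = \<zero>"
    then obtain u where u: "u \<in> nzd R" "u \<otimes> (a \<otimes> t \<ominus> b \<otimes> s) = \<zero>" by blast
    have cc: "a \<otimes> t \<ominus> b \<otimes> s \<in> carrier R" using c nzd_carrier by blast
    have "a \<otimes> t \<ominus> b \<otimes> s = \<zero>" by (rule nzd_cancel[OF u(1) cc u(2)])
    moreover have "a \<otimes> t \<in> carrier R" "b \<otimes> s \<in> carrier R" using c nzd_carrier by auto
    ultimately show "a \<otimes> t = b \<otimes> s" using r_right_minus_eq by metis
  next
    assume e: "a \<otimes> t = b \<otimes> s"
    have cc: "b \<otimes> s \<in> carrier R" using c nzd_carrier by blast
    have "\<one> \<otimes> (a \<otimes> t \<ominus> b \<otimes> s) = \<zero>" unfolding e using cc r_right_minus_eq l_one minus_closed by metis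
    then show "\<exists>u \<in> nzd R. u \<otimes> (a \<otimes> t \<ominus> b \<otimes> s) = \<zero>" using nzd_one by blast
  qed
  show ?thesis
  proof (cases "a \<in> carrier R \<and> s \<in> nzd R \<and> b \<in> carrier R \<and> t \<in> nzd R")
    case True
    then show ?thesis using d key[of] by simp
  next
    case False
    then show ?thesis unfolding d by blast
  qed
qed

lemma frac_rel_equiv: "equiv (carrier R \<times> nzd R) (frac_rel R)"
proof (rule equivI)
  show "frac_rel R \<subseteq> (carrier R \<times> nzd R) \<times> (carrier R \<times> nzd R)"
    by (auto simp: frac_rel_def)
  show "refl_on (carrier R \<times> nzd R) (frac_rel R)"
  proof (rule refl_onI)
    fix x assume "x \<in> carrier R \<times> nzd R"
    then show "(x, x) \<in> frac_rel R" by (cases x) (auto simp: frac_rel_iff)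
  qed
  show "sym (frac_rel R)"
  proof (rule symI)
    fix x y assume "(x, y) \<in> frac_rel R"
    then show "(y, x) \<in> frac_rel R" by (cases x, cases y) (simp add: frac_rel_iff)
  qed
  show "trans (frac_rel R)"
  proof (rule transI)
    fix x y z assume "(x, y) \<in> frac_rel R" "(y, z) \<in> frac_rel R"
    then obtain a s b t c v where xyz: "x = (a, s)" "y = (b, t)" "z = (c, v)"
      and h: "a \<in> carrier R" "s \<in> nzd R" "b \<in> carrier R" "t \<in> nzd R" "c \<in> carrier R" "v \<in> nzd R"
        "a \<otimes> t = b \<otimes> s" "b \<otimes> v = c \<otimes> t"
      by (cases x; cases y; cases z) (auto simp: frac_rel_iff)
    have sc[simp]: "s \<in> carrier R" "t \<in> carrier R" "v \<in> carrier R" using h by (auto simp: nzd_carrier)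
    have "(a \<otimes> v) \<otimes> t = (a \<otimes> t) \<otimes> v" using h(1) by (simp add: m_ac)
    also have "\<dots> = (b \<otimes> s) \<otimes> v" using h(7) by simp
    also have "\<dots> = (b \<otimes> v) \<otimes> s" using h(3) by (simp add: m_ac)
    also have "\<dots> = (c \<otimes> t) \<otimes> s" using h(8) by simp
    also have "\<dots> = (c \<otimes> s) \<otimes> t" using h(5) by (simp add: m_ac)
    finally have e: "(a \<otimes> v) \<otimes> t = (c \<otimes> s) \<otimes> t" .
    have "(a \<otimes> v \<ominus> c \<otimes> s) \<otimes> t = (a \<otimes> v) \<otimes> t \<ominus> (c \<otimes> s) \<otimes> t"
      using h(1,5) sc by algebra
    then have ne: "(a \<otimes> v \<ominus> c \<otimes> s) \<otimes> t = \<zero>" using e h(1,5) by simp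
    have "a \<otimes> v \<ominus> c \<otimes> s = \<zero>"
      using nzd_cancel'[OF h(4) _ ne] h(1,5) sc by simp
    then show "(x, z) \<in> frac_rel R" using h(1-6) xyz(1,3) by (simp add: frac_rel_iff)
  qed
qed


lemma fcls_eq:
  assumes "a \<in> carrier R" "s \<in> nzd R" "b \<in> carrier R" "t \<in> nzd R"
  shows "fcls R a s = fcls R b t \<longleftrightarrow> a \<otimes> t = b \<otimes> s"
  unfolding fcls_def
  using equiv_class_eq_iff[OF frac_rel_equiv, of "(a,s)" "(b,t)"] assms by (auto simp: frac_rel_iff)

lemma mem_fcls: "x \<in> fcls R a s \<longleftrightarrow> ((a, s), x) \<in> frac_rel R"
  by (simp add: fcls_def)

lemma self_fcls: "a \<in> carrier R \<Longrightarrow> s \<in> nzd R \<Longrightarrow> (a, s) \<in> fcls R a s"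
  by (simp add: mem_fcls frac_rel_iff)

lemma fcls_memE:
  assumes "x \<in> fcls R a s"
  obtains a' s' where "x = (a', s')" "a \<in> carrier R" "s \<in> nzd R" "a' \<in> carrier R" "s' \<in> nzd R"
    "a \<otimes> s' = a' \<otimes> s"
  using assms by (cases x) (auto simp: mem_fcls frac_rel_iff)

lemma fcls_eq_other:
  assumes "x \<in> fcls R a s"
  shows "fcls R (fst x) (snd x) = fcls R a s"
  using assms by (elim fcls_memE) (auto simp: fcls_eq)

abbreviation "TT \<equiv> total_frac_ring R"

lemma T_carrier: "carrier TT = {fcls R a s | a s. a \<in> carrier R \<and> s \<in> nzd R}"
  by (auto simp: total_frac_ring_def quotient_def fcls_def)

lemma T_carrierE:
  assumes "x \<in> carrier TT"
  obtains a s where "a \<in> carrier R" "s \<in> nzd R" "x = fcls R a s"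
  using assms by (auto simp: T_carrier)

lemma fcls_in_T: "a \<in> carrier R \<Longrightarrow> s \<in> nzd R \<Longrightarrow> fcls R a s \<in> carrier TT"
  by (auto simp: T_carrier)

lemma T_mult: "x \<otimes>\<^bsub>TT\<^esub> y = frac_mult R x y"
  by (simp add: total_frac_ring_def)
lemma T_add: "x \<oplus>\<^bsub>TT\<^esub> y = frac_add R x y"
  by (simp add: total_frac_ring_def)
lemma T_one: "\<one>\<^bsub>TT\<^esub> = fcls R \<one> \<one>"
  by (simp add: total_frac_ring_def fcls_def)
lemma T_zero: "\<zero>\<^bsub>TT\<^esub> = fcls R \<zero> \<one>"
  by (simp add: total_frac_ring_def fcls_def)

lemma mult_fcls:
  assumes "a \<in> carrier R" "s \<in> nzd R" "b \<in> carrier R" "t \<in> nzd R"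
  shows "fcls R a s \<otimes>\<^bsub>TT\<^esub> fcls R b t = fcls R (a \<otimes> b) (s \<otimes> t)"
proof -
  have "frac_rel R `` {(fst x \<otimes> fst y, snd x \<otimes> snd y)} = fcls R (a \<otimes> b) (s \<otimes> t)"
    if hx: "x \<in> fcls R a s" and hy: "y \<in> fcls R b t" for x y
  proof -
    obtain a' s' where x: "x = (a', s')" "a \<in> carrier R" "s \<in> nzd R" "a' \<in> carrier R" "s' \<in> nzd R" "a \<otimes> s' = a' \<otimes> s"
      using hx by (elim fcls_memE) auto
    obtain b' t' where y: "y = (b', t')" "b \<in> carrier R" "t \<in> nzd R" "b' \<in> carrier R" "t' \<in> nzd R" "b \<otimes> t' = b' \<otimes> t"
      using hy by (elim fcls_memE) auto
    have cs[simp]: "s \<in> carrier R" "t \<in> carrier R" "s' \<in> carrier R" "t' \<in> carrier R"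
      using assms x y by (auto simp: nzd_carrier)
    have "a' \<otimes> b' \<otimes> (s \<otimes> t) = (a' \<otimes> s) \<otimes> (b' \<otimes> t)" using assms x(4) y(4) by (simp add: m_ac)
    also have "\<dots> = (a \<otimes> s') \<otimes> (b \<otimes> t')" using x(6) y(6) by simp
    also have "\<dots> = a \<otimes> b \<otimes> (s' \<otimes> t')" using assms x(4) y(4) by (simp add: m_ac)
    finally have eq: "a' \<otimes> b' \<otimes> (s \<otimes> t) = a \<otimes> b \<otimes> (s' \<otimes> t')" .
    have "fcls R (a' \<otimes> b') (s' \<otimes> t') = fcls R (a \<otimes> b) (s \<otimes> t)"
      by (rule fcls_eq[THEN iffD2, OF _ _ _ _ eq]) (use assms x(4,5) y(4,5) in \<open>auto intro: nzd_mult\<close>)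
    then show ?thesis by (simp add: x(1) y(1) fcls_def)
  qed
  moreover have "(a, s) \<in> fcls R a s" "(b, t) \<in> fcls R b t" using assms by (auto intro: self_fcls)
  ultimately show ?thesis
    unfolding T_mult frac_mult_def by blast
qed

lemma add_fcls:
  assumes "a \<in> carrier R" "s \<in> nzd R" "b \<in> carrier R" "t \<in> nzd R"
  shows "fcls R a s \<oplus>\<^bsub>TT\<^esub> fcls R b t = fcls R (a \<otimes> t \<oplus> b \<otimes> s) (s \<otimes> t)"
proof -
  have "frac_rel R `` {(fst x \<otimes> snd y \<oplus> fst y \<otimes> snd x, snd x \<otimes> snd y)} = fcls R (a \<otimes> t \<oplus> b \<otimes> s) (s \<otimes> t)"
    if hx: "x \<in> fcls R a s" and hy: "y \<in> fcls R b t" for x y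
  proof -
    obtain a' s' where x: "x = (a', s')" "a \<in> carrier R" "s \<in> nzd R" "a' \<in> carrier R" "s' \<in> nzd R" "a \<otimes> s' = a' \<otimes> s"
      using hx by (elim fcls_memE) auto
    obtain b' t' where y: "y = (b', t')" "b \<in> carrier R" "t \<in> nzd R" "b' \<in> carrier R" "t' \<in> nzd R" "b \<otimes> t' = b' \<otimes> t"
      using hy by (elim fcls_memE) auto
    have cs[simp]: "s \<in> carrier R" "t \<in> carrier R" "s' \<in> carrier R" "t' \<in> carrier R"
      using assms x y by (auto simp: nzd_carrier)
    have "(a' \<otimes> t' \<oplus> b' \<otimes> s') \<otimes> (s \<otimes> t) = (a' \<otimes> s) \<otimes> (t \<otimes> t') \<oplus> (b' \<otimes> t) \<otimes> (s \<otimes> s')"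
      using assms x(4) y(4) cs by algebra
    also have "\<dots> = (a \<otimes> s') \<otimes> (t \<otimes> t') \<oplus> (b \<otimes> t') \<otimes> (s \<otimes> s')" using x(6) y(6) by simp
    also have "\<dots> = (a \<otimes> t \<oplus> b \<otimes> s) \<otimes> (s' \<otimes> t')" using assms x(4) y(4) by (simp add: rs)
    finally have eq: "(a' \<otimes> t' \<oplus> b' \<otimes> s') \<otimes> (s \<otimes> t) = (a \<otimes> t \<oplus> b \<otimes> s) \<otimes> (s' \<otimes> t')" .
    have "fcls R (a' \<otimes> t' \<oplus> b' \<otimes> s') (s' \<otimes> t') = fcls R (a \<otimes> t \<oplus> b \<otimes> s) (s \<otimes> t)"
      by (rule fcls_eq[THEN iffD2, OF _ _ _ _ eq]) (use assms x(4,5) y(4,5) in \<open>auto intro: nzd_mult\<close>)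
    then show ?thesis by (simp add: x(1) y(1) fcls_def)
  qed
  moreover have "(a, s) \<in> fcls R a s" "(b, t) \<in> fcls R b t" using assms by (auto intro: self_fcls)
  ultimately show ?thesis
    unfolding T_add frac_add_def by blast
qed

lemma fcls_cong: "a = b \<Longrightarrow> s = t \<Longrightarrow> fcls R a s = fcls R b t" by simp

lemma T_cring: "cring TT"
proof (rule cringI)
  show "abelian_group TT"
  proof (rule abelian_groupI)
    fix x y assume "x \<in> carrier TT" "y \<in> carrier TT"
    then show "x \<oplus>\<^bsub>TT\<^esub> y \<in> carrier TT"
      by (elim T_carrierE) (auto simp: add_fcls nzd_mult nzd_carrier intro!: fcls_in_T)
  next
    show "\<zero>\<^bsub>TT\<^esub> \<in> carrier TT" by (simp add: T_zero fcls_in_T nzd_one)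
  next
    fix x y z assume "x \<in> carrier TT" "y \<in> carrier TT" "z \<in> carrier TT"
    then obtain a s b t c v where h: "a \<in> carrier R" "s \<in> nzd R" "b \<in> carrier R" "t \<in> nzd R"
      "c \<in> carrier R" "v \<in> nzd R" "x = fcls R a s" "y = fcls R b t" "z = fcls R c v"
      by (elim T_carrierE) metis
    have sc: "s \<in> carrier R" "t \<in> carrier R" "v \<in> carrier R" using h by (auto simp: nzd_carrier)
    have e1: "(a \<otimes> t \<oplus> b \<otimes> s) \<otimes> v \<oplus> c \<otimes> (s \<otimes> t) = a \<otimes> (t \<otimes> v) \<oplus> (b \<otimes> v \<oplus> c \<otimes> t) \<otimes> s"
      using h(1,3,5) sc by algebra
    have e2: "s \<otimes> t \<otimes> v = s \<otimes> (t \<otimes> v)" using sc by algebra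
    show "x \<oplus>\<^bsub>TT\<^esub> y \<oplus>\<^bsub>TT\<^esub> z = x \<oplus>\<^bsub>TT\<^esub> (y \<oplus>\<^bsub>TT\<^esub> z)"
      using h sc by (simp add: add_fcls nzd_mult e1 e2)
  next
    fix x y assume "x \<in> carrier TT" "y \<in> carrier TT"
    then obtain a s b t where h: "a \<in> carrier R" "s \<in> nzd R" "b \<in> carrier R" "t \<in> nzd R"
      "x = fcls R a s" "y = fcls R b t"
      by (elim T_carrierE) metis
    have sc: "s \<in> carrier R" "t \<in> carrier R" using h by (auto simp: nzd_carrier)
    have e1: "a \<otimes> t \<oplus> b \<otimes> s = b \<otimes> s \<oplus> a \<otimes> t" using h(1,3) sc by algebra
    have e2: "s \<otimes> t = t \<otimes> s" using sc by algebra
    show "x \<oplus>\<^bsub>TT\<^esub> y = y \<oplus>\<^bsub>TT\<^esub> x"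
      using h sc by (simp add: add_fcls e1 e2)
  next
    fix x assume "x \<in> carrier TT"
    then show "\<zero>\<^bsub>TT\<^esub> \<oplus>\<^bsub>TT\<^esub> x = x"
      by (elim T_carrierE) (auto simp: T_zero add_fcls nzd_one nzd_carrier intro!: fcls_cong)
  next
    fix x assume "x \<in> carrier TT"
    then obtain a s where as: "a \<in> carrier R" "s \<in> nzd R" "x = fcls R a s" by (elim T_carrierE)
    then have sc: "s \<in> carrier R" by (simp add: nzd_carrier)
    have "fcls R (\<ominus> a) s \<oplus>\<^bsub>TT\<^esub> x = \<zero>\<^bsub>TT\<^esub>"
      using as sc by (simp add: add_fcls T_zero fcls_eq nzd_mult nzd_one l_minus l_neg)
    moreover have "fcls R (\<ominus> a) s \<in> carrier TT" using as by (simp add: fcls_in_T)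
    ultimately show "\<exists>y\<in>carrier TT. y \<oplus>\<^bsub>TT\<^esub> x = \<zero>\<^bsub>TT\<^esub>" by blast
  qed
next
  show "comm_monoid TT"
  proof (rule comm_monoidI)
    fix x y assume "x \<in> carrier TT" "y \<in> carrier TT"
    then show "x \<otimes>\<^bsub>TT\<^esub> y \<in> carrier TT"
      by (elim T_carrierE) (auto simp: mult_fcls nzd_mult intro!: fcls_in_T)
  next
    show "\<one>\<^bsub>TT\<^esub> \<in> carrier TT" by (simp add: T_one fcls_in_T nzd_one)
  next
    fix x y z assume "x \<in> carrier TT" "y \<in> carrier TT" "z \<in> carrier TT"
    then show "x \<otimes>\<^bsub>TT\<^esub> y \<otimes>\<^bsub>TT\<^esub> z = x \<otimes>\<^bsub>TT\<^esub> (y \<otimes>\<^bsub>TT\<^esub> z)"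
      by (elim T_carrierE) (auto simp: mult_fcls nzd_mult nzd_carrier m_assoc)
  next
    fix x assume "x \<in> carrier TT"
    then show "\<one>\<^bsub>TT\<^esub> \<otimes>\<^bsub>TT\<^esub> x = x"
      by (elim T_carrierE) (auto simp: T_one mult_fcls nzd_one nzd_carrier)
  next
    fix x y assume "x \<in> carrier TT" "y \<in> carrier TT"
    then show "x \<otimes>\<^bsub>TT\<^esub> y = y \<otimes>\<^bsub>TT\<^esub> x"
      by (elim T_carrierE) (auto simp: mult_fcls nzd_carrier m_comm)
  qed
next
  fix x y z assume "x \<in> carrier TT" "y \<in> carrier TT" "z \<in> carrier TT"
  then obtain a s b t c v where h: "a \<in> carrier R" "s \<in> nzd R" "b \<in> carrier R" "t \<in> nzd R"
    "c \<in> carrier R" "v \<in> nzd R" "x = fcls R a s" "y = fcls R b t" "z = fcls R c v"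
    by (elim T_carrierE) metis
  have cs[simp]: "s \<in> carrier R" "t \<in> carrier R" "v \<in> carrier R" using h by (auto simp: nzd_carrier)
  have e: "(a \<otimes> t \<oplus> b \<otimes> s) \<otimes> c \<otimes> (s \<otimes> v \<otimes> (t \<otimes> v)) = (a \<otimes> c \<otimes> (t \<otimes> v) \<oplus> b \<otimes> c \<otimes> (s \<otimes> v)) \<otimes> (s \<otimes> t \<otimes> v)"
    using h(1,3,5) cs by algebra
  show "(x \<oplus>\<^bsub>TT\<^esub> y) \<otimes>\<^bsub>TT\<^esub> z = x \<otimes>\<^bsub>TT\<^esub> z \<oplus>\<^bsub>TT\<^esub> y \<otimes>\<^bsub>TT\<^esub> z"
    using h by (simp add: add_fcls mult_fcls nzd_mult) (rule fcls_eq[THEN iffD2, OF _ _ _ _ e], auto intro: nzd_mult)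
qed

end


context cring
begin

lemma prime_pow_mem:
  assumes "primeideal P R" "x \<in> carrier R" "x [^] (n::nat) \<in> P" "n \<ge> 1"
  shows "x \<in> P"
  using assms(3,4)
proof (induction n)
  case 0 then show ?case by simp
next
  case (Suc m)
  show ?case
  proof (cases "m = 0")
    case True then show ?thesis using Suc assms by simp
  next
    case False
    have "x [^] m \<otimes> x \<in> P" using Suc by (simp add: nat_pow_Suc)
    then have "x [^] m \<in> P \<or> x \<in> P"
      using primeideal.I_prime[OF assms(1)] assms(2) by blast
    then show ?thesis using Suc False by auto
  qed
qed

lemma pireg_zd:
  assumes pr: "\<forall>x\<in>carrier R. \<exists>n\<ge>1. \<exists>z\<in>carrier R. x [^] (n::nat) = x [^] n \<otimes> x [^] n \<otimes> z"
  shows "zero_dimensional R"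
  unfolding zero_dimensional_def
proof (intro allI impI)
  fix P assume Pp: "primeideal P R"
  interpret P: primeideal P R by (rule Pp)
  show "maximalideal P R"
  proof (rule maximalidealI)
    show "ideal P R" by (rule P.is_ideal)
    show "carrier R \<noteq> P" by (rule P.I_notcarr)
    fix J assume J: "ideal J R" "P \<subseteq> J" "J \<subseteq> carrier R"
    interpret J: ideal J R by (rule J(1))
    show "J = P \<or> J = carrier R"
    proof (cases "J = P")
      case True then show ?thesis by simp
    next
      case False
      then obtain x where x: "x \<in> J" "x \<notin> P" using J(2) by blast
      have xc: "x \<in> carrier R" using x J(3) by blast
      obtain n z where nz: "n \<ge> 1" "z \<in> carrier R" "x [^] (n::nat) = x [^] n \<otimes> x [^] n \<otimes> z"
        using pr xc by blast
      define xp where "xp = x [^] n"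
      have Xc: "xp \<in> carrier R" using xc by (simp add: xp_def)
      have e: "xp = xp \<otimes> xp \<otimes> z" using nz by (simp add: xp_def)
      have "xp \<otimes> (\<one> \<ominus> xp \<otimes> z) = xp \<ominus> xp \<otimes> xp \<otimes> z" using Xc nz(2) by algebra
      also have "\<dots> = \<zero>" using e[symmetric] Xc nz(2) by simp
      finally have "xp \<otimes> (\<one> \<ominus> xp \<otimes> z) \<in> P" by simp
      then have "xp \<in> P \<or> \<one> \<ominus> xp \<otimes> z \<in> P"
        using P.I_prime Xc nz(2) by simp
      moreover have "xp \<notin> P" using prime_pow_mem[OF Pp xc] x(2) nz(1) by (auto simp: xp_def)
      ultimately have m1: "\<one> \<ominus> xp \<otimes> z \<in> J" using J(2) by blast
      have XJ: "xp \<in> J"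
      proof -
        obtain k where k: "n = Suc k" using nz(1) by (cases n) auto
        have "x [^] k \<otimes> x \<in> J" using x(1) xc by (intro J.I_l_closed) auto
        then show ?thesis by (simp add: xp_def k nat_pow_Suc)
      qed
      have m2: "xp \<otimes> z \<in> J" using XJ nz(2) by (intro J.I_r_closed)
      have "\<one> = (\<one> \<ominus> xp \<otimes> z) \<oplus> xp \<otimes> z" using Xc nz(2) by algebra
      then have "\<one> \<in> J" using m1 m2 J.a_closed by metis
      then show ?thesis using J.one_imp_carrier by simp
    qed
  qed
qed

end


context cring
begin

lemma sum_PIdl_mem:
  assumes "M \<subseteq> carrier R" "a \<in> carrier R"
  shows "z \<in> M <+>\<^bsub>R\<^esub> PIdl a \<longleftrightarrow> (\<exists>m\<in>M. \<exists>r\<in>carrier R. z = m \<oplus> r \<otimes> a)"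
  unfolding set_add_def' cgenideal_def by blast

lemma sum_PIdl_props:
  assumes M: "ideal M R" and a: "a \<in> carrier R"
  shows "ideal (M <+>\<^bsub>R\<^esub> PIdl a) R" "M \<subseteq> M <+>\<^bsub>R\<^esub> PIdl a" "a \<in> M <+>\<^bsub>R\<^esub> PIdl a"
proof -
  interpret M: ideal M R by (rule M)
  have Ms: "M \<subseteq> carrier R" by (rule M.a_subset)
  show "ideal (M <+>\<^bsub>R\<^esub> PIdl a) R" by (rule add_ideals[OF M cgenideal_ideal[OF a]])
  show "M \<subseteq> M <+>\<^bsub>R\<^esub> PIdl a"
  proof
    fix m assume m: "m \<in> M"
    then have "m = m \<oplus> \<zero> \<otimes> a" using Ms a by auto
    then show "m \<in> M <+>\<^bsub>R\<^esub> PIdl a" using sum_PIdl_mem[OF Ms a] m by blast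
  qed
  have "a = \<zero> \<oplus> \<one> \<otimes> a" using a by simp
  then show "a \<in> M <+>\<^bsub>R\<^esub> PIdl a" using sum_PIdl_mem[OF Ms a] M.zero_closed by blast
qed

lemma zd_pireg:
  assumes zd: "zero_dimensional R" and xc: "x \<in> carrier R"
  shows "\<exists>n. \<exists>y\<in>carrier R. x [^] (n::nat) = x [^] (Suc n) \<otimes> y"
proof (rule ccontr)
  assume no: "\<not> ?thesis"
  define Sm where "Sm = {x [^] (n::nat) \<otimes> (\<one> \<ominus> x \<otimes> y) | n y. y \<in> carrier R}"
  have Sm_c: "Sm \<subseteq> carrier R" using xc unfolding Sm_def by auto
  have z: "\<zero> \<notin> Sm"
  proof
    assume "\<zero> \<in> Sm"
    then obtain n y where y: "y \<in> carrier R" "x [^] (n::nat) \<otimes> (\<one> \<ominus> x \<otimes> y) = \<zero>"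
      unfolding Sm_def by auto
    define xp where "xp = x [^] n"
    have xpc: "xp \<in> carrier R" using xc by (simp add: xp_def)
    have "xp \<otimes> (\<one> \<ominus> x \<otimes> y) = xp \<ominus> (xp \<otimes> x) \<otimes> y" using xpc xc y(1) by algebra
    then have "xp \<ominus> (xp \<otimes> x) \<otimes> y = \<zero>" using y(2) by (simp add: xp_def)
    then have "xp = (xp \<otimes> x) \<otimes> y" using xpc xc y(1) by simp
    then have "x [^] n = x [^] (Suc n) \<otimes> y" by (simp add: xp_def nat_pow_Suc)
    then show False using no y(1) by blast
  qed
  have one_minus: "\<one> \<ominus> x \<otimes> y \<in> Sm" if "y \<in> carrier R" for y
  proof -
    have e: "\<one> \<ominus> x \<otimes> y = x [^] (0::nat) \<otimes> (\<one> \<ominus> x \<otimes> y)" using that xc by simp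
    show ?thesis unfolding Sm_def mem_Collect_eq
      by (rule exI[of _ "0::nat"], rule exI[of _ y]) (rule conjI[OF e that])
  qed
  have oneS: "\<one> \<in> Sm" using one_minus[of \<zero>] xc by (simp add: a_minus_def)
  have xS: "x \<in> Sm"
  proof -
    have e: "x = x [^] (1::nat) \<otimes> (\<one> \<ominus> x \<otimes> \<zero>)" using xc by (simp add: a_minus_def)
    show ?thesis unfolding Sm_def mem_Collect_eq
      by (rule exI[of _ "1::nat"], rule exI[of _ \<zero>]) (rule conjI[OF e zero_closed])
  qed
  have multS: "p \<otimes> q \<in> Sm" if pS: "p \<in> Sm" and qS: "q \<in> Sm" for p q
  proof -
    obtain n1 y1 where 1: "y1 \<in> carrier R" "p = x [^] (n1::nat) \<otimes> (\<one> \<ominus> x \<otimes> y1)"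
      using pS unfolding Sm_def by blast
    obtain n2 y2 where 2: "y2 \<in> carrier R" "q = x [^] (n2::nat) \<otimes> (\<one> \<ominus> x \<otimes> y2)"
      using qS unfolding Sm_def by blast
    define u where "u = x [^] n1"
    define v where "v = x [^] n2"
    have uv: "u \<in> carrier R" "v \<in> carrier R" using xc by (auto simp: u_def v_def)
    have e1: "p \<otimes> q = (u \<otimes> v) \<otimes> (\<one> \<ominus> x \<otimes> (y1 \<oplus> y2 \<ominus> x \<otimes> y1 \<otimes> y2))"
      unfolding 1(2) 2(2) u_def[symmetric] v_def[symmetric] using uv xc 1(1) 2(1) by algebra
    have e2: "u \<otimes> v = x [^] (n1 + n2)" using xc by (simp add: u_def v_def nat_pow_mult)
    have "p \<otimes> q = x [^] (n1 + n2) \<otimes> (\<one> \<ominus> x \<otimes> (y1 \<oplus> y2 \<ominus> x \<otimes> y1 \<otimes> y2))"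
      using e1 e2 by simp
    moreover have "y1 \<oplus> y2 \<ominus> x \<otimes> y1 \<otimes> y2 \<in> carrier R" using xc 1(1) 2(1) by simp
    ultimately show ?thesis unfolding Sm_def mem_Collect_eq
      by (intro exI[of _ "n1 + n2"] exI[of _ "y1 \<oplus> y2 \<ominus> x \<otimes> y1 \<otimes> y2"] conjI)
  qed
  define F where "F = {I. ideal I R \<and> I \<inter> Sm = {}}"
  have "\<exists>M\<in>F. \<forall>Y\<in>F. M \<subseteq> Y \<longrightarrow> Y = M"
  proof (rule subset_Zorn)
    fix C assume C: "subset.chain F C"
    show "\<exists>U\<in>F. \<forall>Y\<in>C. Y \<subseteq> U"
    proof (cases "C = {}")
      case True
      have "{\<zero>} \<in> F" unfolding F_def using zeroideal z by auto
      then show ?thesis using True by blast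
    next
      case False
      have CF: "C \<subseteq> F" using C unfolding subset_chain_def by blast
      have "subset.chain {I. ideal I R} C"
        using C unfolding subset_chain_def F_def by blast
      from chain_Union_is_ideal[OF this] have "ideal (\<Union>C) R" using False by simp
      moreover have "\<Union>C \<inter> Sm = {}" using CF unfolding F_def by blast
      ultimately have "\<Union>C \<in> F" unfolding F_def by blast
      then show ?thesis by blast
    qed
  qed
  then obtain M where MF: "M \<in> F" and Mmax: "\<And>Y. Y \<in> F \<Longrightarrow> M \<subseteq> Y \<Longrightarrow> Y = M" by blast
  have Mi: "ideal M R" and Md: "M \<inter> Sm = {}" using MF unfolding F_def by auto
  interpret M: ideal M R by (rule Mi)
  have Ms: "M \<subseteq> carrier R" by (rule M.a_subset)
  have ext: "\<exists>m\<in>M. \<exists>r\<in>carrier R. m \<oplus> r \<otimes> a \<in> Sm" if a: "a \<in> carrier R" "a \<notin> M" for a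
  proof -
    note P = sum_PIdl_props[OF Mi a(1)]
    have "M <+>\<^bsub>R\<^esub> PIdl a \<noteq> M" using P(3) a(2) by blast
    then have "M <+>\<^bsub>R\<^esub> PIdl a \<notin> F" using Mmax P(2) by blast
    then have "(M <+>\<^bsub>R\<^esub> PIdl a) \<inter> Sm \<noteq> {}" using P(1) unfolding F_def by blast
    then obtain w where w1: "w \<in> M <+>\<^bsub>R\<^esub> PIdl a" and w2: "w \<in> Sm" by blast
    obtain m r where mr: "m \<in> M" "r \<in> carrier R" "w = m \<oplus> r \<otimes> a"
      using w1 unfolding sum_PIdl_mem[OF Ms a(1)] by blast
    show ?thesis using mr w2 by blast
  qed
  have notcarr: "carrier R \<noteq> M" using oneS Md by blast
  have "primeideal M R"
  proof (rule primeidealI[OF Mi is_cring notcarr])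
    fix a b assume ab: "a \<in> carrier R" "b \<in> carrier R" "a \<otimes> b \<in> M"
    show "a \<in> M \<or> b \<in> M"
    proof (rule ccontr)
      assume "\<not> (a \<in> M \<or> b \<in> M)"
      then have na: "a \<notin> M" "b \<notin> M" by auto
      obtain m1 r1 where 1: "m1 \<in> M" "r1 \<in> carrier R" "m1 \<oplus> r1 \<otimes> a \<in> Sm" using ext[OF ab(1) na(1)] by blast
      obtain m2 r2 where 2: "m2 \<in> M" "r2 \<in> carrier R" "m2 \<oplus> r2 \<otimes> b \<in> Sm" using ext[OF ab(2) na(2)] by blast
      have mc: "m1 \<in> carrier R" "m2 \<in> carrier R" using 1(1) 2(1) Ms by auto
      have prodS: "(m1 \<oplus> r1 \<otimes> a) \<otimes> (m2 \<oplus> r2 \<otimes> b) \<in> Sm" using multS 1(3) 2(3) by blast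
      have eq: "(m1 \<oplus> r1 \<otimes> a) \<otimes> (m2 \<oplus> r2 \<otimes> b) =
          m1 \<otimes> (m2 \<oplus> r2 \<otimes> b) \<oplus> ((r1 \<otimes> a) \<otimes> m2 \<oplus> (r1 \<otimes> r2) \<otimes> (a \<otimes> b))"
        using mc ab(1,2) 1(2) 2(2) by algebra
      have t1: "m1 \<otimes> (m2 \<oplus> r2 \<otimes> b) \<in> M" using M.I_r_closed[OF 1(1), of "m2 \<oplus> r2 \<otimes> b"] mc ab 2(2) by simp
      have t2: "(r1 \<otimes> a) \<otimes> m2 \<in> M" using M.I_l_closed[OF 2(1), of "r1 \<otimes> a"] ab 1(2) by simp
      have t3: "(r1 \<otimes> r2) \<otimes> (a \<otimes> b) \<in> M" using M.I_l_closed[OF ab(3), of "r1 \<otimes> r2"] 1(2) 2(2) by simp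
      have "(m1 \<oplus> r1 \<otimes> a) \<otimes> (m2 \<oplus> r2 \<otimes> b) \<in> M" unfolding eq using t1 t2 t3 M.a_closed by simp
      then show False using prodS Md by blast
    qed
  qed
  then have Mmaxi: "maximalideal M R" using zd unfolding zero_dimensional_def by blast
  have xM: "x \<notin> M" using xS Md by blast
  note P = sum_PIdl_props[OF Mi xc]
  have "M <+>\<^bsub>R\<^esub> PIdl x \<subseteq> carrier R" using ideal.axioms(1)[OF P(1)] additive_subgroup.a_subset by blast
  then have "M <+>\<^bsub>R\<^esub> PIdl x = M \<or> M <+>\<^bsub>R\<^esub> PIdl x = carrier R"
    using maximalideal.I_maximal[OF Mmaxi P(1) P(2)] by blast
  then have "M <+>\<^bsub>R\<^esub> PIdl x = carrier R" using P(3) xM by blast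
  then have "\<one> \<in> M <+>\<^bsub>R\<^esub> PIdl x" by simp
  then obtain m r where mr: "m \<in> M" "r \<in> carrier R" "\<one> = m \<oplus> r \<otimes> x"
    using sum_PIdl_mem[OF Ms xc] by blast
  have mc: "m \<in> carrier R" using mr(1) Ms by blast
  have "\<one> \<ominus> x \<otimes> r = (m \<oplus> r \<otimes> x) \<ominus> x \<otimes> r" using mr(3) by simp
  also have "\<dots> = m" using mc mr(2) xc by algebra
  finally have "\<one> \<ominus> x \<otimes> r \<in> M" using mr(1) by simp
  moreover have "\<one> \<ominus> x \<otimes> r \<in> Sm" using one_minus[OF mr(2)] .
  ultimately show False using Md by blast
qed

end


context cring
begin

lemma pow_shift:
  assumes x: "x \<in> carrier R" and y: "y \<in> carrier R" and e: "x [^] (n::nat) = x [^] (Suc n) \<otimes> y"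
  shows "x [^] (n + j) \<otimes> y [^] j = x [^] n"
proof (induction j)
  case 0 then show ?case using x by simp
next
  case (Suc j)
  define A where "A = x [^] (n + j)"
  define B where "B = y [^] j"
  have AB: "A \<in> carrier R" "B \<in> carrier R" using x y by (auto simp: A_def B_def)
  have "x [^] (n + Suc j) \<otimes> y [^] (Suc j) = (A \<otimes> x) \<otimes> (B \<otimes> y)"
    by (simp add: A_def B_def)
  also have "\<dots> = (A \<otimes> B) \<otimes> (x \<otimes> y)" using AB x y by algebra
  also have "A \<otimes> B = x [^] n" using Suc by (simp add: A_def B_def)
  finally have "x [^] (n + Suc j) \<otimes> y [^] (Suc j) = x [^] n \<otimes> (x \<otimes> y)" .
  also have "\<dots> = x [^] (Suc n) \<otimes> y" using x y by (simp add: m_assoc)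
  also have "\<dots> = x [^] n" by (rule e[symmetric])
  finally show ?case .
qed

lemma pow_fcls:
  assumes "a \<in> carrier R" "s \<in> nzd R"
  shows "fcls R a s [^]\<^bsub>TT\<^esub> (n::nat) = fcls R (a [^] n) (s [^] n)"
proof (induction n)
  case 0 then show ?case by (simp add: T_one)
next
  case (Suc n)
  have "fcls R a s [^]\<^bsub>TT\<^esub> (Suc n) = fcls R a s [^]\<^bsub>TT\<^esub> n \<otimes>\<^bsub>TT\<^esub> fcls R a s"
    by (rule Group.nat_pow_Suc)
  also have "\<dots> = fcls R (a [^] n \<otimes> a) (s [^] n \<otimes> s)"
    using Suc assms by (simp add: mult_fcls nzd_pow)
  finally show ?case by simp
qed

lemma ann_stable:
  fixes n k :: nat
  assumes f: "f \<in> carrier R" and st: "ann R (f [^] n) = ann R (f [^] (n + 1))"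
    and y: "y \<in> carrier R"
  shows "y \<otimes> f [^] (n + k) = \<zero> \<Longrightarrow> y \<otimes> f [^] n = \<zero>"
proof (induction k)
  case 0 then show ?case by simp
next
  case (Suc k)
  have p1: "f [^] k \<otimes> f [^] (n + 1) = f [^] (n + Suc k)"
  proof -
    have "k + (n + 1) = n + Suc k" by simp
    then show ?thesis using nat_pow_mult[OF f, of k "n + 1"] by metis
  qed
  have "(y \<otimes> f [^] k) \<otimes> f [^] (n + 1) = y \<otimes> f [^] (n + Suc k)"
    using f y p1 by (simp only: m_assoc nat_pow_closed)
  then have "y \<otimes> f [^] k \<in> ann R (f [^] (n + 1))" using Suc.prems f y by (simp add: ann_def)
  then have "y \<otimes> f [^] k \<in> ann R (f [^] n)" using st by simp
  then have "(y \<otimes> f [^] k) \<otimes> f [^] n = \<zero>" by (simp add: ann_def)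
  moreover have "f [^] k \<otimes> f [^] n = f [^] (n + k)"
    using nat_pow_mult[OF f, of k n] by (simp add: add.commute)
  ultimately have "y \<otimes> f [^] (n + k) = \<zero>" using f y by (simp add: m_assoc)
  then show ?case by (rule Suc.IH)
qed

lemma f23:
  assumes f: "f \<in> carrier R"
    and P2: "\<exists>n::nat. n \<ge> 1 \<and> ann R (f [^] n) = ann R (f [^] (n + 1)) \<and>
                    (\<exists>h \<in> ann R (f [^] n). ann R (f [^] n) \<inter> ann R h = {\<zero>})"
  shows "\<exists>n::nat. n \<ge> 1 \<and> (\<exists>g \<in> nzd R. f [^] n \<otimes> g = f [^] (2 * n))"
proof -
  obtain n :: nat and h where n: "n \<ge> 1" "ann R (f [^] n) = ann R (f [^] (n + 1))"
    and h: "h \<in> ann R (f [^] n)" "ann R (f [^] n) \<inter> ann R h = {\<zero>}"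
    using P2 by blast
  define F where "F = f [^] n"
  have Fc: "F \<in> carrier R" using f by (simp add: F_def)
  have hc: "h \<in> carrier R" and hF: "h \<otimes> F = \<zero>" using h(1) by (auto simp: ann_def F_def)
  define g where "g = F \<oplus> h"
  have gc: "g \<in> carrier R" using Fc hc by (simp add: g_def)
  have FF: "F \<otimes> F = f [^] (2 * n)" using f by (simp add: F_def nat_pow_mult mult_2)
  have "F \<otimes> g = F \<otimes> F \<oplus> h \<otimes> F" using Fc hc by (simp add: g_def r_distr m_comm)
  then have Fg: "F \<otimes> g = f [^] (2 * n)" using hF FF Fc f by simp
  have "g \<in> nzd R" unfolding nzd_def
  proof (intro CollectI conjI ballI impI gc)
    fix y assume y: "y \<in> carrier R" "g \<otimes> y = \<zero>"
    have e1: "F \<otimes> y \<oplus> h \<otimes> y = \<zero>" using y Fc hc by (simp add: g_def l_distr)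
    have "F \<otimes> (F \<otimes> y \<oplus> h \<otimes> y) = y \<otimes> (F \<otimes> F) \<oplus> y \<otimes> (h \<otimes> F)" using y Fc hc by algebra
    then have "y \<otimes> (F \<otimes> F) = \<zero>" using e1 hF y Fc by simp
    then have "y \<otimes> f [^] (n + n) = \<zero>" using f by (simp add: F_def nat_pow_mult)
    then have yF: "y \<otimes> F = \<zero>" using ann_stable[OF f n(2) y(1), of n] by (simp add: F_def)
    then have "F \<otimes> y = \<zero>" using y Fc by (simp add: m_comm)
    then have "h \<otimes> y = \<zero>" using e1 hc y by simp
    then have "y \<otimes> h = \<zero>" using y hc by (simp add: m_comm)
    then have "y \<in> ann R (f [^] n) \<inter> ann R h" using yF y by (simp add: ann_def F_def)
    then show "y = \<zero>" using h(2) by blast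
  qed
  then show ?thesis using n(1) Fg by (auto simp: F_def)
qed

lemma key2:
  fixes m :: nat
  assumes f: "f \<in> carrier R" and m: "m \<ge> 1" and t: "t \<in> nzd R" and a: "a \<in> carrier R"
    and e: "f [^] m \<otimes> t = f [^] (2 * m) \<otimes> a"
  shows "\<exists>n::nat. n \<ge> 1 \<and> ann R (f [^] n) = ann R (f [^] (n + 1)) \<and>
                    (\<exists>h \<in> ann R (f [^] n). ann R (f [^] n) \<inter> ann R h = {\<zero>})"
proof -
  define F where "F = f [^] m"
  have Fc: "F \<in> carrier R" using f by (simp add: F_def)
  have tc: "t \<in> carrier R" using t by (rule nzd_carrier)
  have FF: "f [^] (2 * m) = F \<otimes> F" using f by (simp add: F_def nat_pow_mult mult_2)
  have e': "F \<otimes> t = F \<otimes> F \<otimes> a" using e FF by (simp add: F_def)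
  have A1: "ann R F \<subseteq> ann R (f [^] (m + 1))"
  proof
    fix y assume "y \<in> ann R F"
    then have y: "y \<in> carrier R" "y \<otimes> F = \<zero>" by (auto simp: ann_def)
    have "y \<otimes> f [^] (m + 1) = (y \<otimes> F) \<otimes> f" using y(1) f by (simp add: F_def m_assoc)
    also have "\<dots> = \<zero>" using y f by simp
    finally show "y \<in> ann R (f [^] (m + 1))" using y f by (simp add: ann_def)
  qed
  have A2: "ann R (f [^] (m + 1)) \<subseteq> ann R F"
  proof
    fix y assume "y \<in> ann R (f [^] (m + 1))"
    then have y: "y \<in> carrier R" "y \<otimes> f [^] (m + 1) = \<zero>" by (auto simp: ann_def)
    obtain k where k: "m = Suc k" using m by (cases m) auto
    have "F \<otimes> F = f [^] (m + m)" using f by (simp add: F_def nat_pow_mult)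
    also have "m + m = (m + 1) + k" using k by simp
    also have "f [^] ((m + 1) + k) = f [^] (m + 1) \<otimes> f [^] k" by (rule nat_pow_mult[OF f, symmetric])
    finally have "F \<otimes> F = f [^] (m + 1) \<otimes> f [^] k" .
    then have "y \<otimes> (F \<otimes> F) = (y \<otimes> f [^] (m + 1)) \<otimes> f [^] k"
      using y(1) f by (simp only: m_assoc nat_pow_closed)
    then have yFF: "y \<otimes> (F \<otimes> F) = \<zero>" using y f by simp
    have "t \<otimes> (y \<otimes> F) = y \<otimes> (F \<otimes> t)" using y Fc tc by algebra
    also have "\<dots> = (y \<otimes> (F \<otimes> F)) \<otimes> a" using e' y Fc a by (simp add: m_assoc)
    also have "\<dots> = \<zero>" using yFF a by simp
    finally have "y \<otimes> F = \<zero>" using nzd_cancel[OF t] y Fc by simp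
    then show "y \<in> ann R F" using y by (simp add: ann_def)
  qed
  define h where "h = t \<ominus> F \<otimes> a"
  have hc: "h \<in> carrier R" using tc Fc a by (simp add: h_def)
  have "h \<otimes> F = F \<otimes> t \<ominus> F \<otimes> F \<otimes> a" using tc Fc a by (simp add: h_def) algebra
  then have "h \<otimes> F = \<zero>" using e' Fc a by simp
  then have hA: "h \<in> ann R F" using hc by (simp add: ann_def)
  have "ann R F \<inter> ann R h = {\<zero>}"
  proof
    show "{\<zero>} \<subseteq> ann R F \<inter> ann R h" using Fc hc by (simp add: ann_def)
    show "ann R F \<inter> ann R h \<subseteq> {\<zero>}"
    proof
      fix y assume "y \<in> ann R F \<inter> ann R h"
      then have y: "y \<in> carrier R" "y \<otimes> F = \<zero>" "y \<otimes> h = \<zero>" by (auto simp: ann_def)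
      have "t \<otimes> y = y \<otimes> h \<oplus> (y \<otimes> F) \<otimes> a" using y(1) tc Fc a by (simp add: h_def) algebra
      then have "t \<otimes> y = \<zero>" using y a by simp
      then show "y \<in> {\<zero>}" using nzd_cancel[OF t] y(1) by simp
    qed
  qed
  then show ?thesis using A1 A2 hA m by (intro exI[of _ m]) (auto simp: F_def)
qed

end


context cring
begin

lemma f32:
  assumes f: "f \<in> carrier R"
    and P3: "\<exists>n::nat. n \<ge> 1 \<and> (\<exists>g \<in> nzd R. f [^] n \<otimes> g = f [^] (2 * n))"
  shows "\<exists>n::nat. n \<ge> 1 \<and> ann R (f [^] n) = ann R (f [^] (n + 1)) \<and>
                    (\<exists>h \<in> ann R (f [^] n). ann R (f [^] n) \<inter> ann R h = {\<zero>})"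
proof -
  obtain n :: nat and g where n: "n \<ge> 1" "g \<in> nzd R" "f [^] n \<otimes> g = f [^] (2 * n)"
    using P3 by blast
  have "f [^] n \<otimes> g = f [^] (2 * n) \<otimes> \<one>" using n(3) f by simp
  then show ?thesis using key2[OF f n(1) n(2) one_closed] by blast
qed

lemma c3_c1:
  assumes P3: "\<forall>f \<in> carrier R. \<exists>n::nat. n \<ge> 1 \<and> (\<exists>g \<in> nzd R. f [^] n \<otimes> g = f [^] (2 * n))"
  shows "zero_dimensional TT"
proof (rule cring.pireg_zd[OF T_cring], intro ballI)
  fix x assume "x \<in> carrier TT"
  then obtain a s where as: "a \<in> carrier R" "s \<in> nzd R" "x = fcls R a s" by (elim T_carrierE)
  obtain n :: nat and g where n: "n \<ge> 1" "g \<in> nzd R" "a [^] n \<otimes> g = a [^] (2 * n)"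
    using P3 as(1) by blast
  define A where "A = a [^] n"
  define S where "S = s [^] n"
  have AS: "A \<in> carrier R" "S \<in> nzd R" using as by (auto simp: A_def S_def nzd_pow)
  have Sc: "S \<in> carrier R" using AS(2) by (rule nzd_carrier)
  have gc: "g \<in> carrier R" using n(2) by (rule nzd_carrier)
  have Ag: "A \<otimes> g = A \<otimes> A" using n(3) as(1) by (simp add: A_def nat_pow_mult mult_2)
  define z where "z = fcls R S g"
  have zc: "z \<in> carrier TT" using Sc AS n(2) by (simp add: z_def fcls_in_T nzd_carrier)
  have xn: "x [^]\<^bsub>TT\<^esub> n = fcls R A S" using as by (simp add: pow_fcls A_def S_def)
  have "x [^]\<^bsub>TT\<^esub> n \<otimes>\<^bsub>TT\<^esub> x [^]\<^bsub>TT\<^esub> n \<otimes>\<^bsub>TT\<^esub> z = fcls R (A \<otimes> A \<otimes> S) (S \<otimes> S \<otimes> g)"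
    unfolding xn z_def using AS Sc n(2) by (simp add: mult_fcls nzd_mult)
  also have "\<dots> = fcls R A S"
  proof (rule fcls_eq[THEN iffD2])
    show "A \<otimes> A \<otimes> S \<in> carrier R" using AS Sc by simp
    show "S \<otimes> S \<otimes> g \<in> nzd R" using AS n(2) by (simp add: nzd_mult)
    show "A \<in> carrier R" "S \<in> nzd R" using AS by auto
    have "A \<otimes> A \<otimes> S \<otimes> S = (A \<otimes> g) \<otimes> S \<otimes> S" using Ag by simp
    also have "\<dots> = A \<otimes> (S \<otimes> S \<otimes> g)" using AS(1) Sc gc by algebra
    finally show "A \<otimes> A \<otimes> S \<otimes> S = A \<otimes> (S \<otimes> S \<otimes> g)" .
  qed
  finally have eqn: "x [^]\<^bsub>TT\<^esub> n = x [^]\<^bsub>TT\<^esub> n \<otimes>\<^bsub>TT\<^esub> x [^]\<^bsub>TT\<^esub> n \<otimes>\<^bsub>TT\<^esub> z"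
    using xn by simp
  show "\<exists>n::nat\<ge>1. \<exists>z\<in>carrier TT. x [^]\<^bsub>TT\<^esub> n = x [^]\<^bsub>TT\<^esub> n \<otimes>\<^bsub>TT\<^esub> x [^]\<^bsub>TT\<^esub> n \<otimes>\<^bsub>TT\<^esub> z"
    by (rule exI[of _ n], rule conjI[OF n(1)], rule bexI[of _ z], rule eqn, rule zc)
qed

lemma c1_key:
  assumes zd: "zero_dimensional TT" and f: "f \<in> carrier R"
  shows "\<exists>m::nat. \<exists>t a. m \<ge> 1 \<and> t \<in> nzd R \<and> a \<in> carrier R \<and> f [^] m \<otimes> t = f [^] (2 * m) \<otimes> a"
proof -
  interpret T: cring TT by (rule T_cring)
  define x where "x = fcls R f \<one>"
  have xc: "x \<in> carrier TT" using f nzd_one by (simp add: x_def fcls_in_T)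
  obtain n :: nat and y where y: "y \<in> carrier TT" "x [^]\<^bsub>TT\<^esub> n = x [^]\<^bsub>TT\<^esub> (Suc n) \<otimes>\<^bsub>TT\<^esub> y"
    using T.zd_pireg[OF zd xc] by blast
  define m where "m = Suc n"
  have sh: "x [^]\<^bsub>TT\<^esub> (n + m) \<otimes>\<^bsub>TT\<^esub> y [^]\<^bsub>TT\<^esub> m = x [^]\<^bsub>TT\<^esub> n"
    by (rule T.pow_shift[OF xc y(1) y(2)])
  define w where "w = y [^]\<^bsub>TT\<^esub> m"
  have wc: "w \<in> carrier TT" using y(1) by (simp add: w_def)
  have "x [^]\<^bsub>TT\<^esub> (2 * m) \<otimes>\<^bsub>TT\<^esub> w = (x [^]\<^bsub>TT\<^esub> (n + m) \<otimes>\<^bsub>TT\<^esub> w) \<otimes>\<^bsub>TT\<^esub> x"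
  proof -
    have "x [^]\<^bsub>TT\<^esub> (2 * m) = x [^]\<^bsub>TT\<^esub> (n + m) \<otimes>\<^bsub>TT\<^esub> x"
      by (simp add: m_def mult_2)
    then show ?thesis using xc wc by (simp add: T.m_ac)
  qed
  also have "\<dots> = x [^]\<^bsub>TT\<^esub> n \<otimes>\<^bsub>TT\<^esub> x" using sh by (simp add: w_def)
  also have "\<dots> = x [^]\<^bsub>TT\<^esub> m" by (simp add: m_def)
  finally have e: "x [^]\<^bsub>TT\<^esub> (2 * m) \<otimes>\<^bsub>TT\<^esub> w = x [^]\<^bsub>TT\<^esub> m" .
  obtain a t where at: "a \<in> carrier R" "t \<in> nzd R" "w = fcls R a t" using wc by (elim T_carrierE)
  have tc: "t \<in> carrier R" using at(2) by (rule nzd_carrier)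
  have "x [^]\<^bsub>TT\<^esub> (2 * m) \<otimes>\<^bsub>TT\<^esub> w = fcls R (f [^] (2 * m) \<otimes> a) (\<one> \<otimes> t)"
    using f at by (simp add: x_def pow_fcls nzd_one mult_fcls nzd_pow)
  moreover have "x [^]\<^bsub>TT\<^esub> m = fcls R (f [^] m) \<one>"
    using f by (simp add: x_def pow_fcls nzd_one)
  ultimately have "fcls R (f [^] (2 * m) \<otimes> a) (\<one> \<otimes> t) = fcls R (f [^] m) \<one>" using e by simp
  then have "f [^] (2 * m) \<otimes> a \<otimes> \<one> = f [^] m \<otimes> (\<one> \<otimes> t)"
    using f at tc by (subst (asm) fcls_eq) (auto simp: nzd_one nzd_mult)
  then have fe: "f [^] m \<otimes> t = f [^] (2 * m) \<otimes> a" using f at tc by simp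
  have m1: "m \<ge> 1" by (simp add: m_def)
  show ?thesis
    by (rule exI[of _ m], rule exI[of _ t], rule exI[of _ a]) (rule conjI[OF m1 conjI[OF at(2) conjI[OF at(1) fe]]])
qed

end



theorem lemma3p2:
  fixes R :: "('a, 'b) ring_scheme"
  assumes "cring R"
  defines "c1 \<equiv> zero_dimensional (total_frac_ring R)"
      and "c2 \<equiv> (\<forall>f \<in> carrier R. \<exists>n::nat. n \<ge> 1 \<and>
                    ann R (f [^]\<^bsub>R\<^esub> n) = ann R (f [^]\<^bsub>R\<^esub> (n + 1)) \<and>
                    (\<exists>h \<in> ann R (f [^]\<^bsub>R\<^esub> n). ann R (f [^]\<^bsub>R\<^esub> n) \<inter> ann R h = {\<zero>\<^bsub>R\<^esub>}))"
      and "c3 \<equiv> (\<forall>f \<in> carrier R. \<exists>n::nat. n \<ge> 1 \<and>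
                    (\<exists>g \<in> nzd R. f [^]\<^bsub>R\<^esub> n \<otimes>\<^bsub>R\<^esub> g = f [^]\<^bsub>R\<^esub> (2 * n)))"
  shows "(c1 \<longleftrightarrow> c2) \<and> (c2 \<longleftrightarrow> c3)"
proof -
  interpret cring R by fact
  have c23: "c2 \<Longrightarrow> c3" unfolding c2_def c3_def using f23 by blast
  have c32: "c3 \<Longrightarrow> c2" unfolding c2_def c3_def using f32 by blast
  have c31: "c3 \<Longrightarrow> c1" unfolding c1_def c3_def using c3_c1 by blast
  have c12: "c1 \<Longrightarrow> c2"
    unfolding c2_def
  proof (intro ballI)
    fix f assume c1 and f: "f \<in> carrier R"
    then obtain m :: nat and t a where "m \<ge> 1" "t \<in> nzd R" "a \<in> carrier R"
      "f [^]\<^bsub>R\<^esub> m \<otimes>\<^bsub>R\<^esub> t = f [^]\<^bsub>R\<^esub> (2 * m) \<otimes>\<^bsub>R\<^esub> a"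
      using c1_key[OF _ f] unfolding c1_def by blast
    then show "\<exists>n::nat. n \<ge> 1 \<and> ann R (f [^]\<^bsub>R\<^esub> n) = ann R (f [^]\<^bsub>R\<^esub> (n + 1)) \<and>
                    (\<exists>h \<in> ann R (f [^]\<^bsub>R\<^esub> n). ann R (f [^]\<^bsub>R\<^esub> n) \<inter> ann R h = {\<zero>\<^bsub>R\<^esub>})"
      using key2[OF f] by blast
  qed
  show ?thesis using c23 c32 c31 c12 by blast
qed


end
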